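(* For every $g\ge 1$, the orientation $\mathcal{H}_g^e$ is a Pfaffian orientation of $\mathcal{H}_g$; that is, every nice cycle of $\mathcal{H}_g$ is oddly oriented relative to $\mathcal{H}_g^e$.
   Context: The graphs $\mathcal{H}_g$ with four hub vertices $v_1,v_2,v_3,v_4$ and orientations $\mathcal{H}_g^e$ are defined recursively. $\mathcal{H}_1$ is the 4-cycle with edges $\{v_1,v_2\},\{v_1,v_3\},\{v_2,v_4\},\{v_3,v_4\}$, and $\mathcal{H}_1^e$ orients them as $v_1\to v_2$, $v_1\to v_3$, $v_4\to v_2$, $v_3\to v_4$. For $g>1$, take four disjoint copies $\mathcal{H}_{g-1}^{(i)}$, $i=1,2,3,4$, of $\mathcal{H}_{g-1}$, each oriented as a copy of $\mathcal{H}_{g-1}^e$, with hubs $v_k^{(i)}$ corresponding to $v_k$; identify $v_1^{(1)}$ and $v_1^{(4)}$ as the hub $v_1$ of $\mathcal{H}_g$, $v_2^{(2)}$ and $v_1^{(3)}$ as $v_4$, $v_2^{(1)}$ and $v_1^{(2)}$ as $v_3$, and $v_2^{(3)}$ and $v_2^{(4)}$ as $v_2$; $\mathcal{H}_g^e$ is the union of the orientations of the four copies. (Equivalently, $\mathcal{H}_g$ arises from $\mathcal{H}_{g-1}$ by keeping each edge $\{u,v\}$ and adding two new adjacent vertices $w,w'$ with $w$ adjacent to $u$ and $w'$ adjacent to $v$.) All cycles are elementary. A cycle $C$ of a graph $G$ is nice if the subgraph of $G$ induced by the vertices not on $C$ has a perfect matching. An even cycle is oddly oriented if, traversing it in either direction,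 an odd number of its edges are oriented in the direction of traversal. An orientation is Pfaffian if every nice cycle is oddly oriented. *)

theory Defs
  imports Main
begin

(* Vertices: Hub k (k = 1..4) are the hubs of H_g; Inner i v is the vertex v of the
   i-th copy of H_(g-1) (for those vertices of the copy that are not identified
   with a hub of H_g). *)
datatype vtx = Hub nat | Inner nat vtx

(* embedding of copy i of H_(g-1) into H_g, realising the hub identifications *)
fun emb :: "nat \<Rightarrow> vtx \<Rightarrow> vtx" where
  "emb i (Hub k) =
     (if i = 1 \<and> k = 1 then Hub 1
      else if i = 4 \<and> k = 1 then Hub 1
      else if i = 2 \<and> k = 2 then Hub 4
      else if i = 3 \<and> k = 1 then Hub 4
      else if i = 1 \<and> k = 2 then Hub 3
      else if i = 2 \<and> k = 1 then Hub 3
      else if i = 3 \<and> k = 2 then Hub 2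
      else if i = 4 \<and> k = 2 then Hub 2
      else Inner i (Hub k))"
| "emb i (Inner j w) = Inner i (Inner j w)"

(* the orientation H_g^e as a set of arcs (u,v) meaning u \<rightarrow> v; H_0 is unused *)
fun arcs :: "nat \<Rightarrow> (vtx \<times> vtx) set" where
  "arcs 0 = {}"
| "arcs (Suc 0) = {(Hub 1, Hub 2), (Hub 1, Hub 3), (Hub 4, Hub 2), (Hub 3, Hub 4)}"
| "arcs (Suc (Suc n)) =
     (\<Union>i\<in>{1,2,3,4::nat}. (\<lambda>(a, b). (emb i a, emb i b)) ` arcs (Suc n))"

definition verts :: "nat \<Rightarrow> vtx set" where
  "verts g = fst ` arcs g \<union> snd ` arcs g"

definition adj :: "nat \<Rightarrow> vtx \<Rightarrow> vtx \<Rightarrow> bool" where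
  "adj g u v \<longleftrightarrow> (u, v) \<in> arcs g \<or> (v, u) \<in> arcs g"

definition is_cycle :: "nat \<Rightarrow> vtx list \<Rightarrow> bool" where
  "is_cycle g c \<longleftrightarrow> length c \<ge> 3 \<and> distinct c \<and> set c \<subseteq> verts g \<and>
     (\<forall>i < length c. adj g (c ! i) (c ! ((i + 1) mod length c)))"

definition has_perfect_matching :: "nat \<Rightarrow> vtx set \<Rightarrow> bool" where
  "has_perfect_matching g S \<longleftrightarrow>
     (\<exists>M. M \<subseteq> {{u, v} | u v. adj g u v \<and> u \<in> S \<and> v \<in> S} \<and>
          (\<forall>x\<in>S. \<exists>!e. e \<in> M \<and> x \<in> e))"

definition nice_cycle :: "nat \<Rightarrow> vtx list \<Rightarrow> bool" where
  "nice_cycle g c \<longleftrightarrow> is_cycle g c \<and> has_perfect_matching g (verts g - set c)"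

definition fwd_count :: "nat \<Rightarrow> vtx list \<Rightarrow> nat" where
  "fwd_count g c = card {i. i < length c \<and> (c ! i, c ! ((i + 1) mod length c)) \<in> arcs g}"

definition bwd_count :: "nat \<Rightarrow> vtx list \<Rightarrow> nat" where
  "bwd_count g c = card {i. i < length c \<and> (c ! ((i + 1) mod length c), c ! i) \<in> arcs g}"

definition oddly_oriented :: "nat \<Rightarrow> vtx list \<Rightarrow> bool" where
  "oddly_oriented g c \<longleftrightarrow> even (length c) \<and> odd (fwd_count g c) \<and> odd (bwd_count g c)"

definition pfaffian :: "nat \<Rightarrow> bool" where
  "pfaffian g \<longleftrightarrow> (\<forall>c. nice_cycle g c \<longrightarrow> oddly_oriented g c)"

end

theory Submission
  imports Defs
begin


definition step :: "(vtx \<times> vtx) set \<Rightarrow> (vtx \<times> vtx) set" where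
  "step X = (\<Union>i\<in>{1,2,3,4::nat}. (\<lambda>(a, b). (emb i a, emb i b)) ` X)"

fun AA :: "nat \<Rightarrow> (vtx \<times> vtx) set" where
  "AA 0 = {(Hub 1, Hub 2)}"
| "AA (Suc n) = step (AA n)"

lemma arcs_AA: "n \<ge> 1 \<Longrightarrow> arcs n = AA n"
proof (induction n rule: nat_induct_at_least)
  case base
  show ?case by (auto simp: step_def)
next
  case (Suc n)
  then obtain m where "n = Suc m" by (cases n) auto
  then show ?case using Suc by (simp add: step_def)
qed

fun ishub :: "vtx \<Rightarrow> bool" where
  "ishub (Hub k) = True" | "ishub (Inner i v) = False"

lemma emb_inj: "emb i a = emb i b \<Longrightarrow> a = b"
  by (cases a; cases b) (auto split: if_splits)

lemma emb_hub: "ishub (emb i a) \<Longrightarrow> a = Hub 1 \<or> a = Hub 2"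
  by (cases a) (auto split: if_splits)

lemma emb_nonhub: "\<not> ishub (emb i a) \<Longrightarrow> \<exists>w. emb i a = Inner i w"
  by (cases a) (auto split: if_splits)

lemma emb_inner: "emb j a = Inner i w \<Longrightarrow> j = i"
  by (cases a) (auto split: if_splits)

lemma emb_shared:
  assumes "i \<in> {1,2,3,4}" "j \<in> {1,2,3,4}" "i \<noteq> j"
    "emb i a = emb j a'" "emb i b = emb j b'"
  shows "a = b"
proof -
  have h: "ishub (emb i a)" "ishub (emb i b)"
    using assms emb_nonhub emb_inner by metis+
  then have "a = Hub 1 \<or> a = Hub 2" "b = Hub 1 \<or> b = Hub 2" by (auto dest: emb_hub)
  moreover have "a' = Hub 1 \<or> a' = Hub 2" "b' = Hub 1 \<or> b' = Hub 2"
    using h assms(4,5) by (metis emb_hub)+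
  ultimately show ?thesis using assms by auto
qed



definition pe :: "'a list \<Rightarrow> ('a \<times> 'a) list" where
  "pe p = zip p (tl p)"

definition ce :: "'a list \<Rightarrow> ('a \<times> 'a) list" where
  "ce c = zip c (rotate1 c)"

definition adjX :: "(vtx \<times> vtx) set \<Rightarrow> vtx \<Rightarrow> vtx \<Rightarrow> bool" where
  "adjX X u v \<longleftrightarrow> (u, v) \<in> X \<or> (v, u) \<in> X"

definition walk :: "(vtx \<times> vtx) set \<Rightarrow> vtx list \<Rightarrow> bool" where
  "walk X p \<longleftrightarrow> (\<forall>(a, b)\<in>set (pe p). adjX X a b)"

definition cF :: "(vtx \<times> vtx) set \<Rightarrow> (vtx \<times> vtx) list \<Rightarrow> nat" where
  "cF X E = length (filter (\<lambda>e. e \<in> X) E)"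

definition cB :: "(vtx \<times> vtx) set \<Rightarrow> (vtx \<times> vtx) list \<Rightarrow> nat" where
  "cB X E = length (filter (\<lambda>(a, b). (b, a) \<in> X) E)"

lemma pe_simps[simp]: "pe [] = []" "pe [x] = []" "pe (x # y # r) = (x, y) # pe (y # r)"
  by (auto simp: pe_def)

lemma length_pe[simp]: "length (pe p) = length p - 1"
  by (simp add: pe_def)

lemma pe_snoc: "xs \<noteq> [] \<Longrightarrow> pe (xs @ [y]) = pe xs @ [(last xs, y)]"
proof (induction xs)
  case Nil then show ?case by simp
next
  case (Cons a xs) then show ?case by (cases xs) auto
qed

lemma pe_split: "m < length p \<Longrightarrow> pe p = pe (take (Suc m) p) @ pe (drop m p)"
proof (induction p arbitrary: m)
  case Nil then show ?case by simp
next
  case (Cons a p)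
  show ?case
  proof (cases m)
    case 0 then show ?thesis by (cases p) auto
  next
    case (Suc m')
    then obtain b p' where "p = b # p'" using Cons by (cases p) auto
    then show ?thesis using Cons Suc by auto
  qed
qed

lemma pe_rev: "pe (rev q) = rev (map prod.swap (pe q))"
proof (induction q)
  case Nil then show ?case by simp
next
  case (Cons a q)
  show ?case
  proof (cases q)
    case Nil then show ?thesis by simp
  next
    case (Cons b q')
    then have "pe (rev (a # q)) = pe (rev q) @ [(last (rev q), a)]"
      using pe_snoc[of "rev q" a] by simp
    then show ?thesis using Cons.IH Cons by (simp add: last_rev)
  qed
qed

lemma pe_map: "pe (map f q) = map (map_prod f f) (pe q)"
  by (induction q rule: induct_list012) auto

lemma zip_app_long: "length ys \<le> length xs \<Longrightarrow> zip (xs @ zs) ys = zip xs ys"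
  by (simp add: zip_append1)

lemma ce_pe: "c \<noteq> [] \<Longrightarrow> ce c = pe (c @ [hd c])"
proof (cases c)
  case (Cons a l)
  have "zip (a # l @ [a]) (l @ [a]) = zip ((a # l) @ [a]) (l @ [a])" by simp
  also have "\<dots> = zip (a # l) (l @ [a])" by (rule zip_app_long) simp
  finally show ?thesis using Cons by (simp add: ce_def pe_def)
qed simp

lemma zip_map_same: "zip (map f xs) (map f ys) = map (map_prod f f) (zip xs ys)"
  by (induction xs arbitrary: ys) (auto simp: zip_Cons1 split: list.splits)

lemma ce_map: "ce (map f c) = map (map_prod f f) (ce c)"
  unfolding ce_def by (simp add: rotate1_map zip_map_same)

lemma zip_rotate1: "length xs = length ys \<Longrightarrow> rotate1 (zip xs ys) = zip (rotate1 xs) (rotate1 ys)"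
  by (cases xs; cases ys) auto

lemma ce_rotate: "ce (rotate n c) = rotate n (ce c)"
proof (induction n)
  case 0 then show ?case by simp
next
  case (Suc n)
  have "ce (rotate (Suc n) c) = zip (rotate1 (rotate n c)) (rotate1 (rotate1 (rotate n c)))"
    by (simp add: ce_def rotate_Suc)
  also have "\<dots> = rotate1 (ce (rotate n c))"
    by (simp add: ce_def zip_rotate1)
  finally show ?case using Suc by (simp add: rotate_Suc)
qed

lemma length_filter_rotate: "length (filter P (rotate n xs)) = length (filter P xs)"
proof (induction n)
  case (Suc n)
  have "length (filter P (rotate1 ys)) = length (filter P ys)" for ys :: "'a list"
    by (cases ys) auto
  then show ?case using Suc by (simp add: rotate_Suc)
qed simp

lemma cF_app[simp]: "cF X (E1 @ E2) = cF X E1 + cF X E2"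
  by (simp add: cF_def)
lemma cB_app[simp]: "cB X (E1 @ E2) = cB X E1 + cB X E2"
  by (simp add: cB_def)
lemma cF_rev[simp]: "cF X (rev E) = cF X E"
  by (simp add: cF_def rev_filter[symmetric])
lemma cB_rev[simp]: "cB X (rev E) = cB X E"
  by (simp add: cB_def rev_filter[symmetric])
lemma cF_swap: "cF X (map prod.swap E) = cB X E"
  by (induction E) (auto simp: cF_def cB_def)
lemma cB_swap: "cB X (map prod.swap E) = cF X E"
  by (induction E) (auto simp: cF_def cB_def)
lemma cF_rotate[simp]: "cF X (rotate n E) = cF X E"
  by (simp add: cF_def length_filter_rotate)
lemma cB_rotate[simp]: "cB X (rotate n E) = cB X E"
  by (simp add: cB_def length_filter_rotate)

lemma walk_rev: "walk X (rev q) = walk X q"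
  by (auto simp: walk_def pe_rev adjX_def)

lemma walk_split:
  assumes "walk X p" "m < length p"
  shows "walk X (take (Suc m) p)" "walk X (drop m p)"
  using assms pe_split[OF assms(2)] by (auto simp: walk_def)

lemma walk_Cons: "walk X (x # y # r) \<longleftrightarrow> adjX X x y \<and> walk X (y # r)"
  by (simp add: walk_def)

lemma walk_single[simp]: "walk X [x]" "walk X []"
  by (auto simp: walk_def)

lemma pe_distinct: "distinct q \<Longrightarrow> (a, b) \<in> set (pe q) \<Longrightarrow> a \<noteq> b"
proof (induction q rule: induct_list012)
  case (3 x y r) then show ?case by auto
qed auto

lemma ce_distinct: "distinct c \<Longrightarrow> length c \<ge> 2 \<Longrightarrow> (a, b) \<in> set (ce c) \<Longrightarrow> a \<noteq> b"
proof -
  assume d: "distinct c" and l: "length c \<ge> 2" and e: "(a, b) \<in> set (ce c)"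
  then obtain i where i: "i < length c" "(a, b) = (c ! i, rotate1 c ! i)"
    by (auto simp: ce_def in_set_zip)
  then have "b = c ! (Suc i mod length c)" by (simp add: nth_rotate1)
  moreover have "Suc i mod length c \<noteq> i"
  proof (cases "Suc i < length c")
    case True then show ?thesis by simp
  next
    case False then have "Suc i = length c" using i(1) by simp
    then show ?thesis using l by simp
  qed
  moreover have "Suc i mod length c < length c" by (rule mod_less_divisor) (use l in linarith)
  ultimately show ?thesis using i d by (metis nth_eq_iff_index_eq prod.inject)
qed



lemma adj_step:
  assumes "adjX (step X) x y"
  shows "\<exists>i\<in>{1,2,3,4}. \<exists>u v. adjX X u v \<and> x = emb i u \<and> y = emb i v"
  using assms unfolding adjX_def step_def by auto

lemma arc_pull:
  assumes "i \<in> {1,2,3,4}" "u \<noteq> v"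
  shows "((emb i u, emb i v) \<in> step X) = ((u, v) \<in> X)"
proof
  assume "(emb i u, emb i v) \<in> step X"
  then obtain j a b where j: "j \<in> {1,2,3,4}" "(a, b) \<in> X" "emb i u = emb j a" "emb i v = emb j b"
    unfolding step_def by auto
  show "(u, v) \<in> X"
  proof (cases "i = j")
    case True then show ?thesis using j emb_inj by metis
  next
    case False have "u = v" using emb_shared[OF assms(1) j(1) False j(3,4)] .
    then show ?thesis using assms by simp
  qed
next
  assume "(u, v) \<in> X" then show "(emb i u, emb i v) \<in> step X"
    using assms(1) unfolding step_def by force
qed

lemma adj_pull:
  assumes "i \<in> {1,2,3,4}" "u \<noteq> v"
  shows "adjX (step X) (emb i u) (emb i v) = adjX X u v"
  using arc_pull[OF assms] arc_pull[OF assms(1), of v u] assms(2) by (auto simp: adjX_def)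

lemma cnt_pull:
  assumes "i \<in> {1,2,3,4}" "\<forall>(a, b)\<in>set E. a \<noteq> b"
  shows "cF (step X) (map (map_prod (emb i) (emb i)) E) = cF X E"
        "cB (step X) (map (map_prod (emb i) (emb i)) E) = cB X E"
  using assms(2)
proof (induction E)
  case (Cons e E)
  obtain a b where e: "e = (a, b)" by (cases e)
  { case 1 then show ?case using Cons e arc_pull[OF assms(1), of a b] by (auto simp: cF_def) }
  { case 2 then show ?case using Cons e arc_pull[OF assms(1), of b a] by (auto simp: cB_def) }
qed (auto simp: cF_def cB_def)

lemma walk_pull:
  assumes "i \<in> {1,2,3,4}" "distinct q"
  shows "walk (step X) (map (emb i) q) = walk X q"
  using assms(2) by (induction q rule: induct_list012)
    (auto simp: walk_Cons adj_pull[OF assms(1)])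

abbreviation CC :: "(vtx \<times> vtx) set" where "CC \<equiv> AA (Suc 0)"

lemma CC_eq: "CC = {(Hub 1, Hub 3), (Hub 3, Hub 4), (Hub 4, Hub 2), (Hub 1, Hub 2)}"
  by (auto simp: step_def)

lemma term_arc:
  assumes "i \<in> {1,2,3,4::nat}"
  shows "(emb i (Hub 1), emb i (Hub 2)) \<in> CC" "(emb i (Hub 2), emb i (Hub 1)) \<notin> CC"
  unfolding CC_eq using assms by auto

definition PathP :: "(vtx \<times> vtx) set \<Rightarrow> bool" where
  "PathP X \<longleftrightarrow> (\<forall>p. distinct p \<and> p \<noteq> [] \<and> walk X p \<and> hd p = Hub 1 \<and> last p = Hub 2 \<longrightarrow>
      odd (length (pe p)) \<and> odd (cF X (pe p)) \<and> even (cB X (pe p)))"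

definition cyc :: "(vtx \<times> vtx) set \<Rightarrow> vtx list \<Rightarrow> bool" where
  "cyc X c \<longleftrightarrow> length c \<ge> 3 \<and> distinct c \<and> (\<forall>(a, b)\<in>set (ce c). adjX X a b)"

definition CycP :: "(vtx \<times> vtx) set \<Rightarrow> bool" where
  "CycP X \<longleftrightarrow> (\<forall>c. cyc X c \<longrightarrow> even (length c) \<and> odd (cF X (ce c)) \<and> odd (cB X (ce c)))"

lemma segcount:
  assumes P: "PathP X" and i: "i \<in> {1,2,3,4}" and q: "distinct q" "q \<noteq> []" "walk X q"
    and h: "ishub (emb i (hd q))" "ishub (emb i (last q))" "hd q \<noteq> last q"
  shows "adjX CC (emb i (hd q)) (emb i (last q)) \<and> odd (length (pe q)) \<and>
    cF (step X) (pe (map (emb i) q)) mod 2 = cF CC [(emb i (hd q), emb i (last q))] mod 2 \<and>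
    cB (step X) (pe (map (emb i) q)) mod 2 = cB CC [(emb i (hd q), emb i (last q))] mod 2"
proof -
  have E: "\<forall>(a, b)\<in>set (pe q). a \<noteq> b" using pe_distinct[OF q(1)] by auto
  have cF': "cF (step X) (pe (map (emb i) q)) = cF X (pe q)"
    and cB': "cB (step X) (pe (map (emb i) q)) = cB X (pe q)"
    using cnt_pull[OF i E] by (simp_all add: pe_map)
  have hq: "hd q = Hub 1 \<or> hd q = Hub 2" "last q = Hub 1 \<or> last q = Hub 2"
    using h emb_hub by blast+
  show ?thesis
  proof (cases "hd q = Hub 1")
    case True
    then have l: "last q = Hub 2" using hq h(3) by auto
    have "odd (length (pe q)) \<and> odd (cF X (pe q)) \<and> even (cB X (pe q))"
      using P q True l unfolding PathP_def by blast
    then show ?thesis using True l term_arc[OF i] cF' cB'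
      by (auto simp: adjX_def cF_def cB_def odd_iff_mod_2_eq_one even_iff_mod_2_eq_zero)
  next
    case False
    then have f: "hd q = Hub 2" "last q = Hub 1" using hq h(3) by auto
    have "rev q \<noteq> []" "hd (rev q) = Hub 1" "last (rev q) = Hub 2" using f q(2)
      by (auto simp: hd_rev last_rev)
    moreover have "distinct (rev q)" "walk X (rev q)" using q walk_rev by auto
    ultimately have "odd (length (pe (rev q))) \<and> odd (cF X (pe (rev q))) \<and> even (cB X (pe (rev q)))"
      using P unfolding PathP_def by blast
    then have "odd (length (pe q)) \<and> even (cF X (pe q)) \<and> odd (cB X (pe q))"
      by (simp add: pe_rev cF_swap cB_swap)
    then show ?thesis using f term_arc[OF i] cF' cB'
      by (auto simp: adjX_def cF_def cB_def odd_iff_mod_2_eq_one even_iff_mod_2_eq_zero)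
  qed
qed



lemma seg:
  assumes "walk (step X) (x # r)" "\<not> ishub x" "x = emb i u" "i \<in> {1,2,3,4}" "ishub (last (x # r))"
  shows "\<exists>k q. k < length r \<and> (\<forall>j<k. \<not> ishub (r ! j)) \<and> ishub (r ! k) \<and>
           map (emb i) q = x # take (Suc k) r \<and> walk X q"
  using assms
proof (induction r arbitrary: x u)
  case Nil then show ?case by simp
next
  case (Cons y r')
  have a: "adjX (step X) x y" and w: "walk (step X) (y # r')" using Cons.prems(1) by (auto simp: walk_Cons)
  obtain j u' v where j: "j \<in> {1,2,3,4}" "adjX X u' v" "x = emb j u'" "y = emb j v"
    using adj_step[OF a] by blast
  have "\<not> ishub (emb i u)" using Cons.prems(2,3) by simp
  then obtain w0 where "emb i u = Inner i w0" using emb_nonhub by blast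
  then have "emb j u' = Inner i w0" using j(3) Cons.prems(3) by simp
  then have "j = i" by (rule emb_inner)
  then have "emb i u' = emb i u" using j(3) Cons.prems(3) by simp
  then have u': "u' = u" by (rule emb_inj)
  have yi: "y = emb i v" using j(4) \<open>j = i\<close> by simp
  show ?case
  proof (cases "ishub y")
    case True
    have m: "map (emb i) [u, v] = x # take (Suc 0) (y # r')" using j \<open>j = i\<close> Cons.prems(3) by simp
    have wk: "walk X [u, v]" using j(2) u' by (simp add: walk_Cons)
    have g1: "0 < length (y # r')" by simp
    have g2: "\<forall>j<0. \<not> ishub ((y # r') ! j)" by simp
    have g3: "ishub ((y # r') ! 0)" using True by simp
    show ?thesis by (rule exI[of _ 0], rule exI[of _ "[u, v]"]) (intro conjI g1 g2 g3 m wk)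
  next
    case False
    have lh: "ishub (last (y # r'))" using Cons.prems(5) by simp
    have IHr: "\<exists>k q. k < length r' \<and> (\<forall>j<k. \<not> ishub (r' ! j)) \<and> ishub (r' ! k) \<and>
           map (emb i) q = y # take (Suc k) r' \<and> walk X q"
      by (rule Cons.IH[OF w False yi Cons.prems(4) lh])
    then obtain k q where k: "k < length r'" "\<forall>j<k. \<not> ishub (r' ! j)" "ishub (r' ! k)"
        "map (emb i) q = y # take (Suc k) r'" "walk X q"
      by (elim exE conjE) 
    have "q \<noteq> []" using k(4) by (cases q) simp_all
    then obtain v' q' where q: "q = v' # q'" by (cases q) simp_all
    then have "emb i v' = emb i v" using k(4) yi by simp
    then have "v' = v" by (rule emb_inj)
    have m: "map (emb i) (u # q) = x # take (Suc (Suc k)) (y # r')"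
      using k(4) Cons.prems(3) by simp
    have wk: "walk X (u # q)" using k(5) q j(2) u' \<open>v' = v\<close> by (simp add: walk_Cons)
    have g2: "\<forall>j<Suc k. \<not> ishub ((y # r') ! j)"
      using k(2) False by (auto simp: less_Suc_eq_0_disj)
    have g1: "Suc k < length (y # r')" using k(1) by simp
    have g3: "ishub ((y # r') ! Suc k)" using k(3) by simp
    show ?thesis by (rule exI[of _ "Suc k"], rule exI[of _ "u # q"]) (intro conjI g1 g2 g3 m wk)
  qed
qed

lemma ex_seg:
  assumes "walk (step X) (x # r)" "r \<noteq> []" "ishub x" "ishub (last (x # r))"
  shows "\<exists>i\<in>{1,2,3,4}. \<exists>k q. k < length r \<and> (\<forall>j<k. \<not> ishub (r ! j)) \<and> ishub (r ! k) \<and>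
           map (emb i) q = x # take (Suc k) r \<and> walk X q"
proof -
  obtain y r' where r: "r = y # r'" using assms(2) by (cases r) auto
  have a: "adjX (step X) x y" and w: "walk (step X) (y # r')" using assms(1) r by (auto simp: walk_Cons)
  obtain i u v where j: "i \<in> {1,2,3,4}" "adjX X u v" "x = emb i u" "y = emb i v"
    using adj_step[OF a] by blast
  show ?thesis
  proof (cases "ishub y")
    case True
    have m: "map (emb i) [u, v] = x # take (Suc 0) r" using j r by simp
    have wk: "walk X [u, v]" using j(2) by (simp add: walk_Cons)
    have g1: "0 < length r" using r by simp
    have g2: "\<forall>j<0. \<not> ishub (r ! j)" by simp
    have g3: "ishub (r ! 0)" using True r by simp
    show ?thesis by (rule bexI[OF _ j(1)], rule exI[of _ 0], rule exI[of _ "[u, v]"]) (intro conjI g1 g2 g3 m wk)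
  next
    case False
    have lh: "ishub (last (y # r'))" using assms(4) r by simp
    have IHr: "\<exists>k q. k < length r' \<and> (\<forall>j<k. \<not> ishub (r' ! j)) \<and> ishub (r' ! k) \<and>
           map (emb i) q = y # take (Suc k) r' \<and> walk X q"
      by (rule seg[OF w False j(4) j(1) lh])
    then obtain k q where k: "k < length r'" "\<forall>j<k. \<not> ishub (r' ! j)" "ishub (r' ! k)"
        "map (emb i) q = y # take (Suc k) r'" "walk X q"
      by (elim exE conjE)
    have "q \<noteq> []" using k(4) by (cases q) simp_all
    then obtain v' q' where q: "q = v' # q'" by (cases q) simp_all
    then have "emb i v' = emb i v" using k(4) j(4) by simp
    then have "v' = v" by (rule emb_inj)
    have m: "map (emb i) (u # q) = x # take (Suc (Suc k)) r"
      using k(4) j(3) r by simp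
    have wk: "walk X (u # q)" using k(5) q j(2) \<open>v' = v\<close> by (simp add: walk_Cons)
    have g2: "\<forall>j<Suc k. \<not> ishub (r ! j)"
      using k(2) False r by (auto simp: less_Suc_eq_0_disj)
    have g1: "Suc k < length r" using k(1) r by simp
    have g3: "ishub (r ! Suc k)" using k(3) r by simp
    show ?thesis by (rule bexI[OF _ j(1)], rule exI[of _ "Suc k"], rule exI[of _ "u # q"]) (intro conjI g1 g2 g3 m wk)
  qed
qed



lemma mod2_add: "(a::nat) mod 2 = b mod 2 \<Longrightarrow> c mod 2 = d mod 2 \<Longrightarrow> (a + c) mod 2 = (b + d) mod 2"
  by (metis mod_add_eq)

definition DWc :: "(vtx \<times> vtx) set \<Rightarrow> vtx list \<Rightarrow> bool" where
  "DWc X p \<longleftrightarrow> walk CC (filter ishub p) \<and> length (pe p) mod 2 = length (pe (filter ishub p)) mod 2 \<and>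
    cF (step X) (pe p) mod 2 = cF CC (pe (filter ishub p)) mod 2 \<and>
    cB (step X) (pe p) mod 2 = cB CC (pe (filter ishub p)) mod 2"

lemma seg_facts:
  assumes P: "PathP X" and i: "i \<in> {1,2,3,4}" and k: "k < length r" "ishub (r ! k)"
    "map (emb i) q = x # take (Suc k) r" "walk X q" and hx: "ishub x" and dp: "distinct (x # r)"
  shows "adjX CC x (r ! k) \<and> length (pe (map (emb i) q)) mod 2 = 1 \<and>
    cF (step X) (pe (map (emb i) q)) mod 2 = cF CC [(x, r ! k)] mod 2 \<and>
    cB (step X) (pe (map (emb i) q)) mod 2 = cB CC [(x, r ! k)] mod 2"
proof -
  have qne: "q \<noteq> []" using k(3) by (cases q) simp_all
  have hdq: "emb i (hd q) = x" using k(3) qne by (cases q) simp_all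
  have tk: "take (Suc k) r = take k r @ [r ! k]" using k(1) by (simp add: take_Suc_conv_app_nth)
  have "last (map (emb i) q) = r ! k" using k(3) tk by simp
  then have lastq: "emb i (last q) = r ! k" using qne by (simp add: last_map)
  have "distinct (x # take (Suc k) r)" using dp by (auto dest: in_set_takeD)
  then have dq: "distinct q" using k(3) by (metis distinct_map)
  have "x \<noteq> r ! k" using dp k(1) by (auto dest: nth_mem)
  then have neq: "hd q \<noteq> last q" using hdq lastq by auto
  have "ishub (emb i (hd q))" "ishub (emb i (last q))" using hdq lastq hx k(2) by simp_all
  from segcount[OF P i dq qne k(4) this neq]
  have S1: "adjX CC x (r ! k)" and S2: "odd (length (pe q))"
    and S3: "cF (step X) (pe (map (emb i) q)) mod 2 = cF CC [(x, r ! k)] mod 2"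
    and S4: "cB (step X) (pe (map (emb i) q)) mod 2 = cB CC [(x, r ! k)] mod 2"
    using hdq lastq by simp_all
  have "length (pe (map (emb i) q)) mod 2 = 1" using S2 by (simp only: pe_map length_map odd_iff_mod_2_eq_one)
  then show ?thesis using S1 S3 S4 by blast
qed

lemma DW:
  assumes P: "PathP X"
  shows "distinct p \<Longrightarrow> p \<noteq> [] \<Longrightarrow> walk (step X) p \<Longrightarrow> ishub (hd p) \<Longrightarrow> ishub (last p) \<Longrightarrow> DWc X p"
proof (induction "length p" arbitrary: p rule: less_induct)
  case less
  obtain x r where p: "p = x # r" using less.prems(2) by (cases p) auto
  show ?case
  proof (cases "r = []")
    case True then show ?thesis using p less.prems by (simp add: DWc_def cF_def cB_def)
  next
    case False
    have hx: "ishub x" using less.prems(4) p by simp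
    have hl: "ishub (last (x # r))" using less.prems(5) p by simp
    have wl: "walk (step X) (x # r)" using less.prems(3) p by simp
    have dp: "distinct (x # r)" using less.prems(1) p by simp
    obtain i k q where i: "i \<in> {1,2,3,4}" and k: "k < length r" "\<forall>j<k. \<not> ishub (r ! j)" "ishub (r ! k)"
      "map (emb i) q = x # take (Suc k) r" "walk X q"
      using ex_seg[OF wl False hx hl] by (elim bexE exE conjE)
    have SF: "adjX CC x (r ! k) \<and> length (pe (map (emb i) q)) mod 2 = 1 \<and>
      cF (step X) (pe (map (emb i) q)) mod 2 = cF CC [(x, r ! k)] mod 2 \<and>
      cB (step X) (pe (map (emb i) q)) mod 2 = cB CC [(x, r ! k)] mod 2"
      by (rule seg_facts[OF P i k(1) k(3) k(4) k(5) hx dp])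
    define t where "t = drop k r"
    have sk: "Suc k < length p" using k(1) p by simp
    have tp: "take (Suc (Suc k)) p = map (emb i) q" using k(4) p by simp
    have dt: "drop (Suc k) p = t" using p t_def by simp
    have pep: "pe p = pe (map (emb i) q) @ pe t"
      using pe_split[OF sk] tp dt by simp
    have t1: "t = r ! k # drop (Suc k) r" using k(1) t_def by (simp add: Cons_nth_drop_Suc)
    have tprops: "distinct t" "t \<noteq> []" "walk (step X) t" "ishub (hd t)" "ishub (last t)"
      "length t < length p"
    proof -
      show "distinct t" using dp t_def by (metis distinct.simps(2) distinct_drop)
      show "t \<noteq> []" using t1 by simp
      show "walk (step X) t" unfolding dt[symmetric] by (rule walk_split(2)[OF less.prems(3) sk])
      show "ishub (hd t)" using t1 k(3) by simp
      have "last t = last r" unfolding t_def using k(1) by (rule last_drop)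
      moreover have "last (x # r) = last r" using False by simp
      ultimately show "ishub (last t)" using hl by simp
      show "length t < length p" unfolding t_def p by simp
    qed
    have IH: "DWc X t" using less.hyps[OF tprops(6) tprops(1-5)] .
    have ftk: "filter ishub (take k r) = []"
      using k(2) by (auto simp: filter_empty_conv in_set_conv_nth)
    have "r = take k r @ t" using t_def by simp
    then have fp: "filter ishub p = x # filter ishub t" using p hx ftk
      by (metis filter.simps(2) filter_append self_append_conv2)
    define ft where "ft = filter ishub (drop (Suc k) r)"
    have ftt: "filter ishub t = r ! k # ft" using t1 k(3) ft_def by simp
    have pef: "pe (filter ishub p) = [(x, r ! k)] @ pe (filter ishub t)"
      using fp ftt by simp
    have a1: "adjX CC x (r ! k)" and a2: "length (pe (map (emb i) q)) mod 2 = 1"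
      and a3: "cF (step X) (pe (map (emb i) q)) mod 2 = cF CC [(x, r ! k)] mod 2"
      and a4: "cB (step X) (pe (map (emb i) q)) mod 2 = cB CC [(x, r ! k)] mod 2"
      using SF by blast+
    have b1: "walk CC (filter ishub t)"
      and b2: "length (pe t) mod 2 = length (pe (filter ishub t)) mod 2"
      and b3: "cF (step X) (pe t) mod 2 = cF CC (pe (filter ishub t)) mod 2"
      and b4: "cB (step X) (pe t) mod 2 = cB CC (pe (filter ishub t)) mod 2"
      using IH unfolding DWc_def by blast+
    have c1: "walk CC (filter ishub p)"
      unfolding fp ftt walk_Cons using a1 b1[unfolded ftt] by (rule conjI)
    have c2: "length (pe p) mod 2 = length (pe (filter ishub p)) mod 2"
    proof -
      have e1: "length (pe p) = length (pe (map (emb i) q)) + length (pe t)" using pep by (simp only: length_append)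
      have e2: "length (pe (filter ishub p)) = length [(x, r ! k)] + length (pe (filter ishub t))"
        using pef by (simp only: length_append)
      have a2': "length (pe (map (emb i) q)) mod 2 = length [(x, r ! k)] mod 2"
        unfolding a2 by simp
      show ?thesis unfolding e1 e2 by (rule mod2_add[OF a2' b2])
    qed
    have c3: "cF (step X) (pe p) mod 2 = cF CC (pe (filter ishub p)) mod 2"
      unfolding pep pef cF_app by (rule mod2_add[OF a3 b3])
    have c4: "cB (step X) (pe p) mod 2 = cB CC (pe (filter ishub p)) mod 2"
      unfolding pep pef cB_app by (rule mod2_add[OF a4 b4])
    show ?thesis unfolding DWc_def using c1 c2 c3 c4 by (intro conjI)
  qed
qed



lemma walk_verts:
  "walk X h \<Longrightarrow> length h \<ge> 2 \<Longrightarrow> x \<in> set h \<Longrightarrow> x \<in> fst ` X \<union> snd ` X"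
proof (induction h rule: induct_list012)
  case (3 a b r)
  have ab: "adjX X a b" and w: "walk X (b # r)" using "3.prems"(1) by (auto simp: walk_Cons)
  have ea: "a \<in> fst ` X \<union> snd ` X" "b \<in> fst ` X \<union> snd ` X"
    using ab unfolding adjX_def by (auto intro: rev_image_eqI)
  show ?case
  proof (cases r)
    case Nil then show ?thesis using "3.prems"(3) ea by auto
  next
    case (Cons c r')
    then show ?thesis using "3.IH"(2)[OF w] "3.prems"(3) ea by auto
  qed
qed auto

lemma CC_verts: "fst ` CC \<union> snd ` CC = {Hub 1, Hub 2, Hub 3, Hub 4}"
  unfolding CC_eq by auto

lemma len4:
  assumes "distinct h" "set h \<subseteq> {Hub 1, Hub 2, Hub 3, Hub 4}"
  shows "length h \<le> 4"
proof -
  have "length h = card (set h)" using assms(1) by (simp add: distinct_card)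
  also have "\<dots> \<le> card {Hub 1, Hub 2, Hub 3, Hub 4}" by (rule card_mono[OF _ assms(2)]) simp
  also have "\<dots> \<le> 4" by simp
  finally show ?thesis .
qed

lemma list_cases4:
  assumes "length h \<le> 4" "h \<noteq> []"
  shows "(\<exists>a. h = [a]) \<or> (\<exists>a b. h = [a, b]) \<or> (\<exists>a b c. h = [a, b, c]) \<or> (\<exists>a b c d. h = [a, b, c, d])"
proof -
  have "length h = 1 \<or> length h = 2 \<or> length h = 3 \<or> length h = 4" using assms by (cases h) (auto simp: le_Suc_eq numeral_eq_Suc)
  then show ?thesis
    by (elim disjE) (auto simp: length_Suc_conv numeral_eq_Suc)
qed



lemma C_path:
  assumes "distinct h" "h \<noteq> []" "walk CC h" "hd h = Hub 1" "last h = Hub 2"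
  shows "odd (length (pe h)) \<and> odd (cF CC (pe h)) \<and> even (cB CC (pe h))"
proof -
  have l2: "length h \<ge> 2"
  proof (rule ccontr)
    assume "\<not> 2 \<le> length h"
    then obtain a where "h = [a]" using assms(2) by (cases h) (auto simp: Suc_le_eq)
    then show False using assms(4,5) by simp
  qed
  have sv: "set h \<subseteq> {Hub 1, Hub 2, Hub 3, Hub 4}"
    using walk_verts[OF assms(3) l2] CC_verts by blast
  have "length h \<le> 4" by (rule len4[OF assms(1) sv])
  then have cs: "(\<exists>a. h = [a]) \<or> (\<exists>a b. h = [a, b]) \<or> (\<exists>a b c. h = [a, b, c]) \<or> (\<exists>a b c d. h = [a, b, c, d])"
    using list_cases4 assms(2) by blast
  show ?thesis
    using cs assms sv unfolding CC_eq
    by (elim disjE exE; simp add: walk_Cons adjX_def cF_def cB_def; elim disjE; simp)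
qed

lemma C_cyc:
  assumes "distinct h" "h \<noteq> []" "walk CC (x # h)" "hd h \<noteq> x" "last h = x"
  shows "even (length (pe (x # h))) \<and> odd (cF CC (pe (x # h))) \<and> odd (cB CC (pe (x # h)))"
proof -
  have l2: "length (x # h) \<ge> 2" using assms(2) by (cases h) auto
  have sv: "set (x # h) \<subseteq> {Hub 1, Hub 2, Hub 3, Hub 4}"
    using walk_verts[OF assms(3) l2] CC_verts by blast
  then have sv': "set h \<subseteq> {Hub 1, Hub 2, Hub 3, Hub 4}" by simp
  have "length h \<le> 4" by (rule len4[OF assms(1) sv'])
  then have cs: "(\<exists>a. h = [a]) \<or> (\<exists>a b. h = [a, b]) \<or> (\<exists>a b c. h = [a, b, c]) \<or> (\<exists>a b c d. h = [a, b, c, d])"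
    using list_cases4 assms(2) by blast
  show ?thesis
    using cs assms sv unfolding CC_eq
    by (elim disjE exE; simp add: walk_Cons adjX_def cF_def cB_def; elim disjE; simp)
qed



lemma cyc_walk: "cyc X c \<Longrightarrow> walk X (c @ [hd c])"
proof -
  assume a: "cyc X c"
  then have "c \<noteq> []" by (auto simp: cyc_def)
  then show ?thesis using a by (simp add: cyc_def walk_def ce_pe[symmetric])
qed

lemma AA0_verts: "fst ` AA 0 \<union> snd ` AA 0 = {Hub 1, Hub 2}" by auto

lemma base: "PathP (AA 0) \<and> CycP (AA 0)"
proof
  show "PathP (AA 0)" unfolding PathP_def
  proof (intro allI impI, elim conjE)
    fix p assume a: "distinct p" "p \<noteq> []" "walk (AA 0) p" "hd p = Hub 1" "last p = Hub 2"
    have l2: "length p \<ge> 2"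
    proof (rule ccontr)
      assume "\<not> 2 \<le> length p"
      then obtain x where "p = [x]" using a(2) by (cases p) (auto simp: Suc_le_eq)
      then show False using a(4,5) by simp
    qed
    have sv: "set p \<subseteq> {Hub 1, Hub 2}" using walk_verts[OF a(3) l2] AA0_verts by blast
    have "length p = card (set p)" using a(1) by (simp add: distinct_card)
    also have "\<dots> \<le> card {Hub 1, Hub 2}" by (rule card_mono[OF _ sv]) simp
    also have "\<dots> \<le> 2" by simp
    finally have "length p = 2" using l2 by simp
    then obtain u v where "p = [u, v]" by (auto simp: length_Suc_conv numeral_eq_Suc)
    then show "odd (length (pe p)) \<and> odd (cF (AA 0) (pe p)) \<and> even (cB (AA 0) (pe p))"
      using a(4,5) by (simp add: cF_def cB_def)
  qed
  show "CycP (AA 0)" unfolding CycP_def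
  proof (intro allI impI)
    fix c assume a: "cyc (AA 0) c"
    have w: "walk (AA 0) (c @ [hd c])" by (rule cyc_walk[OF a])
    have l3: "length c \<ge> 3" and d: "distinct c" using a by (auto simp: cyc_def)
    have "set (c @ [hd c]) \<subseteq> {Hub 1, Hub 2}"
      using walk_verts[OF w] l3 AA0_verts by fastforce
    then have sv: "set c \<subseteq> {Hub 1, Hub 2}" by simp
    have "length c = card (set c)" using d by (simp add: distinct_card)
    also have "\<dots> \<le> card {Hub 1, Hub 2}" by (rule card_mono[OF _ sv]) simp
    also have "\<dots> \<le> 2" by simp
    finally show "even (length c) \<and> odd (cF (AA 0) (ce c)) \<and> odd (cB (AA 0) (ce c))" using l3 by simp
  qed
qed

lemma filter_last: "p \<noteq> [] \<Longrightarrow> P (last p) \<Longrightarrow> filter P p \<noteq> [] \<and> last (filter P p) = last p"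
proof -
  assume "p \<noteq> []" "P (last p)"
  moreover have "p = butlast p @ [last p]" using \<open>p \<noteq> []\<close> by simp
  ultimately show ?thesis by (metis filter.simps(1,2) filter_append last_snoc snoc_eq_iff_butlast)
qed

lemma path_step:
  assumes P: "PathP X"
  shows "PathP (step X)"
  unfolding PathP_def
proof (intro allI impI, elim conjE)
  fix p assume a: "distinct p" "p \<noteq> []" "walk (step X) p" "hd p = Hub 1" "last p = Hub 2"
  have "DWc X p" by (rule DW[OF P a(1-3)]) (simp_all add: a(4,5))
  then have d1: "walk CC (filter ishub p)"
    and d2: "length (pe p) mod 2 = length (pe (filter ishub p)) mod 2"
    and d3: "cF (step X) (pe p) mod 2 = cF CC (pe (filter ishub p)) mod 2"
    and d4: "cB (step X) (pe p) mod 2 = cB CC (pe (filter ishub p)) mod 2"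
    unfolding DWc_def by blast+
  obtain r where pr: "p = Hub 1 # r" using a(2,4) by (cases p) auto
  have fh: "hd (filter ishub p) = Hub 1" "filter ishub p \<noteq> []" using pr by simp_all
  have fl: "last (filter ishub p) = Hub 2" using filter_last[of p ishub] a(2,5) by simp
  have "odd (length (pe (filter ishub p))) \<and> odd (cF CC (pe (filter ishub p))) \<and> even (cB CC (pe (filter ishub p)))"
    by (rule C_path[OF _ fh(2) d1 fh(1) fl]) (simp add: a(1))
  then show "odd (length (pe p)) \<and> odd (cF (step X) (pe p)) \<and> even (cB (step X) (pe p))"
    using d2 d3 d4 by (simp only: odd_iff_mod_2_eq_one even_iff_mod_2_eq_zero) simp
qed



lemma nohub_copy:
  assumes "i \<in> {1,2,3,4}"
  shows "walk (step X) p \<Longrightarrow> \<forall>x\<in>set p. \<not> ishub x \<Longrightarrow> p \<noteq> [] \<Longrightarrow> hd p = emb i u \<Longrightarrow> set p \<subseteq> range (emb i)"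
proof (induction p arbitrary: u rule: induct_list012)
  case (2 x) then show ?case by auto
next
  case (3 x y r)
  have a: "adjX (step X) x y" and w: "walk (step X) (y # r)" using "3.prems"(1) by (auto simp: walk_Cons)
  obtain j u' v where j: "j \<in> {1,2,3,4}" "adjX X u' v" "x = emb j u'" "y = emb j v"
    using adj_step[OF a] by blast
  have xu: "x = emb i u" using "3.prems"(4) by simp
  have "\<not> ishub (emb i u)" using "3.prems"(2) xu by simp
  then obtain w0 where "emb i u = Inner i w0" using emb_nonhub by blast
  then have "emb j u' = Inner i w0" using j(3) xu by simp
  then have "j = i" by (rule emb_inner)
  then have yv: "hd (y # r) = emb i v" using j(4) by simp
  have "set (y # r) \<subseteq> range (emb i)"
    by (rule "3.IH"(2)[OF w _ _ yv]) (use "3.prems"(2) in simp_all)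
  then show ?case using xu by simp
qed simp

lemma caseA:
  assumes C: "CycP X" and c: "cyc (step X) c" and i: "i \<in> {1,2,3,4}" and s: "set c \<subseteq> range (emb i)"
  shows "even (length c) \<and> odd (cF (step X) (ce c)) \<and> odd (cB (step X) (ce c))"
proof -
  define c' where "c' = map (inv (emb i)) c"
  have cc: "map (emb i) c' = c" unfolding c'_def using s
    by (simp add: map_idI f_inv_into_f subsetD)
  have l3: "length c \<ge> 3" and d: "distinct c" using c by (auto simp: cyc_def)
  have d': "distinct c'" using d cc by (metis distinct_map)
  have l': "length c' = length c" using cc by (metis length_map)
  have cec: "ce c = map (map_prod (emb i) (emb i)) (ce c')" using cc ce_map by metis
  have E: "\<forall>(a, b)\<in>set (ce c'). a \<noteq> b" using ce_distinct[OF d'] l3 l' by fastforce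
  have "cyc X c'"
    unfolding cyc_def
  proof (intro conjI)
    show "3 \<le> length c'" using l3 l' by simp
    show "distinct c'" by (rule d')
    show "\<forall>(a, b)\<in>set (ce c'). adjX X a b"
    proof (intro ballI, clarify)
      fix a b assume ab: "(a, b) \<in> set (ce c')"
      then have "(emb i a, emb i b) \<in> set (ce c)" unfolding cec by force
      then have "adjX (step X) (emb i a) (emb i b)" using c by (auto simp: cyc_def)
      then show "adjX X a b" using adj_pull[OF i] E ab by blast
    qed
  qed
  then have r: "even (length c') \<and> odd (cF X (ce c')) \<and> odd (cB X (ce c'))"
    using C unfolding CycP_def by blast
  show ?thesis unfolding cec cnt_pull[OF i E] using r l' by simp
qed

lemma hubcyc:
  assumes P: "PathP X" and c: "cyc (step X) c" and hx: "ishub (hd c)"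
    and nA: "\<not> (\<exists>i\<in>{1,2,3,4}. set c \<subseteq> range (emb i))"
  shows "even (length c) \<and> odd (cF (step X) (ce c)) \<and> odd (cB (step X) (ce c))"
proof -
  have l3: "length c \<ge> 3" and d: "distinct c" using c by (auto simp: cyc_def)
  obtain x r0 where cx: "c = x # r0" using l3 by (cases c) auto
  have hx': "ishub x" using hx cx by simp
  define r where "r = r0 @ [x]"
  have wr: "walk (step X) (x # r)" using cyc_walk[OF c] cx r_def by simp
  have rne: "r \<noteq> []" and lr: "last (x # r) = x" using r_def by simp_all
  have hl: "ishub (last (x # r))" using lr hx' by simp
  obtain i k q where i: "i \<in> {1,2,3,4}" and k: "k < length r" "\<forall>j<k. \<not> ishub (r ! j)" "ishub (r ! k)"
      "map (emb i) q = x # take (Suc k) r" "walk X q"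
    using ex_seg[OF wr rne hx' hl] by (elim bexE exE conjE)
  have kl: "k < length r0"
  proof (rule ccontr)
    assume "\<not> k < length r0"
    then have "take (Suc k) r = r" using k(1) r_def by simp
    then have "map (emb i) q = x # r" using k(4) by simp
    then have "set (x # r) \<subseteq> range (emb i)" by (metis image_subset_iff list.set_map rangeI)
    moreover have "set c \<subseteq> set (x # r)" using cx r_def by auto
    ultimately have "set c \<subseteq> range (emb i)" by blast
    then show False using nA i by blast
  qed
  have rk: "r ! k = r0 ! k" using kl r_def by (simp add: nth_append)
  have tk: "take (Suc k) r = take (Suc k) r0" using kl r_def by simp
  have dp: "distinct (x # r0)" using d cx by simp
  have SF: "adjX CC x (r0 ! k) \<and> length (pe (map (emb i) q)) mod 2 = 1 \<and>
    cF (step X) (pe (map (emb i) q)) mod 2 = cF CC [(x, r0 ! k)] mod 2 \<and>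
    cB (step X) (pe (map (emb i) q)) mod 2 = cB CC [(x, r0 ! k)] mod 2"
    by (rule seg_facts[OF P i kl k(3)[unfolded rk] k(4)[unfolded tk] k(5) hx' dp])
  have a1: "adjX CC x (r0 ! k)" and a2: "length (pe (map (emb i) q)) mod 2 = 1"
    and a3: "cF (step X) (pe (map (emb i) q)) mod 2 = cF CC [(x, r0 ! k)] mod 2"
    and a4: "cB (step X) (pe (map (emb i) q)) mod 2 = cB CC [(x, r0 ! k)] mod 2"
    using SF by blast+
  define t where "t = drop k r"
  have t0: "t = drop k r0 @ [x]" using t_def r_def kl by simp
  have t1: "t = r0 ! k # drop (Suc k) r0 @ [x]" using t0 kl by (simp add: Cons_nth_drop_Suc)
  have sk: "Suc k < length (x # r)" using k(1) by simp
  have dt: "drop (Suc k) (x # r) = t" using t_def by simp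
  have tp: "take (Suc (Suc k)) (x # r) = map (emb i) q" using k(4) by simp
  have pew: "pe (x # r) = pe (map (emb i) q) @ pe t"
    using pe_split[OF sk] tp dt by simp
  have cew: "ce c = pe (x # r)" using ce_pe[of c] cx r_def by simp
  have td: "distinct t"
  proof -
    have "distinct (drop k r0)" using dp by simp
    moreover have "x \<notin> set (drop k r0)" using dp by (auto dest: in_set_dropD)
    ultimately show ?thesis using t0 by simp
  qed
  have tw: "walk (step X) t" unfolding dt[symmetric] by (rule walk_split(2)[OF wr sk])
  have tne: "t \<noteq> []" using t0 by simp
  have th: "ishub (hd t)" using t1 k(3) rk by simp
  have tl: "ishub (last t)" using t0 hx' by simp
  have IH: "DWc X t" by (rule DW[OF P td tne tw th tl])
  then have b1: "walk CC (filter ishub t)"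
    and b2: "length (pe t) mod 2 = length (pe (filter ishub t)) mod 2"
    and b3: "cF (step X) (pe t) mod 2 = cF CC (pe (filter ishub t)) mod 2"
    and b4: "cB (step X) (pe t) mod 2 = cB CC (pe (filter ishub t)) mod 2"
    unfolding DWc_def by blast+
  define h where "h = filter ishub t"
  have hh: "hd h = r0 ! k" "h \<noteq> []" using t1 k(3) rk h_def by simp_all
  have hl: "last h = x" using filter_last[of t ishub, OF tne tl] t0 h_def by simp
  have hd': "distinct h" using td h_def by simp
  have xk: "r0 ! k \<noteq> x" using dp kl by (auto dest: nth_mem)
  have hw: "walk CC (x # h)"
  proof -
    obtain h' where "h = r0 ! k # h'" using hh by (cases h) auto
    then show ?thesis using a1 b1 h_def by (simp add: walk_Cons)
  qed
  have CY: "even (length (pe (x # h))) \<and> odd (cF CC (pe (x # h))) \<and> odd (cB CC (pe (x # h)))"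
    by (rule C_cyc[OF hd' hh(2) hw]) (use hh hl xk in simp_all)
  have peh: "pe (x # h) = [(x, r0 ! k)] @ pe h"
  proof -
    obtain h' where "h = r0 ! k # h'" using hh by (cases h) auto
    then show ?thesis by simp
  qed
  have a2': "length (pe (map (emb i) q)) mod 2 = length [(x, r0 ! k)] mod 2" unfolding a2 by simp
  have e1: "length (ce c) mod 2 = length (pe (x # h)) mod 2"
    unfolding cew pew peh length_append by (rule mod2_add[OF a2' b2[folded h_def]])
  have e2: "cF (step X) (ce c) mod 2 = cF CC (pe (x # h)) mod 2"
    unfolding cew pew peh cF_app by (rule mod2_add[OF a3 b3[folded h_def]])
  have e3: "cB (step X) (ce c) mod 2 = cB CC (pe (x # h)) mod 2"
    unfolding cew pew peh cB_app by (rule mod2_add[OF a4 b4[folded h_def]])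
  have lc: "length (ce c) = length c" by (simp add: ce_def)
  show ?thesis using CY e1 e2 e3 lc
    by (simp only: odd_iff_mod_2_eq_one even_iff_mod_2_eq_zero) simp
qed


lemma cyc_rotate:
  assumes "cyc X c"
  shows "cyc X (rotate k c)" "set (rotate k c) = set c" "length (rotate k c) = length c"
    "cF X (ce (rotate k c)) = cF X (ce c)" "cB X (ce (rotate k c)) = cB X (ce c)"
  using assms by (auto simp: cyc_def ce_rotate)

lemma cyc_step:
  assumes P: "PathP X" and C: "CycP X"
  shows "CycP (step X)"
  unfolding CycP_def
proof (intro allI impI)
  fix c assume c: "cyc (step X) c"
  show "even (length c) \<and> odd (cF (step X) (ce c)) \<and> odd (cB (step X) (ce c))"
  proof (cases "\<exists>i\<in>{1,2,3,4}. set c \<subseteq> range (emb i)")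
    case True
    then obtain i where "i \<in> {1,2,3,4}" "set c \<subseteq> range (emb i)" by blast
    then show ?thesis using caseA[OF C c] by blast
  next
    case False
    have l3: "length c \<ge> 3" using c by (auto simp: cyc_def)
    have "\<exists>x\<in>set c. ishub x"
    proof (rule ccontr)
      assume nh: "\<not> (\<exists>x\<in>set c. ishub x)"
      obtain x r where cx: "c = x # r" using l3 by (cases c) auto
      have w: "walk (step X) (c @ [hd c])" by (rule cyc_walk[OF c])
      then have "adjX (step X) x (hd (r @ [x]))" using cx by (cases r) (auto simp: walk_Cons)
      then obtain i u v where i: "i \<in> {1,2,3,4}" "x = emb i u"
        using adj_step by blast
      have "set (c @ [hd c]) \<subseteq> range (emb i)"
        by (rule nohub_copy[OF i(1) w]) (use nh cx i(2) in auto)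
      then have "set c \<subseteq> range (emb i)" by simp
      then show False using False i(1) by blast
    qed
    then obtain k where k: "k < length c" "ishub (c ! k)" by (auto simp: in_set_conv_nth)
    define c2 where "c2 = rotate k c"
    have c2: "cyc (step X) c2" "set c2 = set c" "length c2 = length c"
      "cF (step X) (ce c2) = cF (step X) (ce c)" "cB (step X) (ce c2) = cB (step X) (ce c)"
      using cyc_rotate[OF c] c2_def by simp_all
    have "c \<noteq> []" using k(1) by auto
    then have "hd c2 = c ! k" using k(1) c2_def by (simp add: hd_rotate_conv_nth)
    then have "ishub (hd c2)" using k(2) by simp
    moreover have "\<not> (\<exists>i\<in>{1,2,3,4}. set c2 \<subseteq> range (emb i))" using False c2(2) by simp
    ultimately have "even (length c2) \<and> odd (cF (step X) (ce c2)) \<and> odd (cB (step X) (ce c2))"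
      using hubcyc[OF P c2(1)] by blast
    then show ?thesis using c2 by simp
  qed
qed

lemma main_ind: "PathP (AA n) \<and> CycP (AA n)"
proof (induction n)
  case 0 then show ?case by (rule base)
next
  case (Suc n) then show ?case using path_step cyc_step by simp
qed

lemma fwd_eq: "fwd_count g c = cF (arcs g) (ce c)"
proof -
  have "cF (arcs g) (ce c) = card {i. i < length (ce c) \<and> ce c ! i \<in> arcs g}"
    unfolding cF_def by (rule length_filter_conv_card)
  also have "\<dots> = fwd_count g c"
    unfolding fwd_count_def by (rule arg_cong[where f = card]) (auto simp: ce_def nth_rotate1)
  finally show ?thesis by simp
qed

lemma bwd_eq: "bwd_count g c = cB (arcs g) (ce c)"
proof -
  have "cB (arcs g) (ce c) = card {i. i < length (ce c) \<and> (\<lambda>(a, b). (b, a) \<in> arcs g) (ce c ! i)}"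
    unfolding cB_def by (rule length_filter_conv_card)
  also have "\<dots> = bwd_count g c"
    unfolding bwd_count_def by (rule arg_cong[where f = card]) (auto simp: ce_def nth_rotate1)
  finally show ?thesis by simp
qed

theorem theorem3:
  fixes g :: nat
  assumes "g \<ge> 1"
  shows "pfaffian g"
  unfolding pfaffian_def
proof (intro allI impI)
  fix c assume "nice_cycle g c"
  then have ic: "is_cycle g c" by (simp add: nice_cycle_def)
  have A: "arcs g = AA g" using arcs_AA[OF assms] .
  have "cyc (AA g) c"
    unfolding cyc_def
  proof (intro conjI)
    show "3 \<le> length c" "distinct c" using ic by (auto simp: is_cycle_def)
    show "\<forall>(a, b)\<in>set (ce c). adjX (AA g) a b"
    proof (intro ballI, clarify)
      fix a b assume "(a, b) \<in> set (ce c)"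
      then obtain i where i: "i < length c" "a = c ! i" "b = c ! (Suc i mod length c)"
        by (auto simp: ce_def in_set_zip nth_rotate1)
      then have "adj g a b" using ic by (auto simp: is_cycle_def)
      then show "adjX (AA g) a b" using A by (simp add: adj_def adjX_def)
    qed
  qed
  then have "even (length c) \<and> odd (cF (AA g) (ce c)) \<and> odd (cB (AA g) (ce c))"
    using main_ind[of g] unfolding CycP_def by blast
  then show "oddly_oriented g c"
    unfolding oddly_oriented_def fwd_eq bwd_eq A by simp
qed


end
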